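(* Let $\nu,\mu$ be strict partitions with $\mu\subseteq\nu$ and let $T$ be a semistandard shifted tableau of skew shape $\nu/\mu$. At any stage of the mixed rectification of $T$, if an entry $x$ has not yet moved, then every entry located southeast of $x$ is at least as large as $x$.
   Context: A strict partition $\theta=(\theta_1>\dots>\theta_k>0)$ is identified with its shifted Young diagram: row $i$ consists of the cells $(i,j)$ with $i\le j\le i+\theta_i-1$ (English convention, row 1 on top). For strict partitions $\mu\subseteq\nu$, the skew shape $\nu/\mu$ is the set of cells of $\nu$ not in $\mu$. A cell $(i,i)$ is diagonal. For a cell $\mathsf b=(i,j)$ write $\mathsf b^{\uparrow}=(i-1,j)$, $\mathsf b^{\leftarrow}=(i,j-1)$, $\mathsf b^{\downarrow}=(i+1,j)$, $\mathsf b^{\uparrow\leftarrow}=(i-1,j-1)$. Alphabet: for each positive integer $i$ there is a low letter $\underline{i}$ and a high letter $\overline{\imath}$, ordered $\underline1<\overline1<\underline2<\overline2<\cdots$. Raising means replacing $\underline i$ by $\overline\imath$; lowering the reverse. A semistandard (shifted) tableau of shape $\nu/\mu$ is a filling of the cells of $\nu/\mu$ with such letters so that rows weakly increase left to right, columns weakly increase top to bottom, no diagonal cell contains a low letter, each column contains at most one copy of each high letter, and each row contains at most one copy of each low letter. A tableau with holes additionally allows a symbol $\bullet$ (neither high nor low, allowed anywhere and repeatedly). Mixed rectification of $T$: place a $\bullet$ in every cell of the bottom row of $\mu$. Bullets are swapped with entries by mixed slides, and a bullet is deleted as soon as there is no entry of the tableau to its southeast. An entry $y$ in cell $\mathsf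 b$ is available if $\mathsf b^\uparrow$ or $\mathsf b^\leftarrow$ contains a $\bullet$. Available entries are ordered by the letter order, ties broken so that among equal low letters the northmost is least and among equal high letters the westmost is least. Let $y\in\mathsf b$ be the least available entry and apply the unique applicable slide from the first of the collections (R1)–(R6) in which some slide applies (a cell vacated by an entry receives a $\bullet$): (R1) if $\mathsf b^\uparrow,\mathsf b^\leftarrow,\mathsf b^{\uparrow\leftarrow}$ all contain $\bullet$, move $y$ to $\mathsf b^{\uparrow\leftarrow}$; or if $\mathsf b$ is diagonal and $\mathsf b^\uparrow,\mathsf b^{\uparrow\leftarrow}$ contain $\bullet$, move $y$ to $\mathsf b^{\uparrow\leftarrow}$. (R2) if $\mathsf b^{\uparrow\leftarrow}$ contains an entry $x$ and $\mathsf b^\uparrow,\mathsf b^\leftarrow$ contain $\bullet$: if $y$ is low and $x\ne y$, move $y$ to $\mathsf b^\uparrow$; if $y$ is high and $x\neq y$, move $y$ to $\mathsf b^\leftarrow$. (R3) if $\mathsf b^\leftarrow$ is diagonal, $\mathsf b^{\uparrow\leftarrow}$ and the cell left of it contain entries, $\mathsf b^\uparrow,\mathsf b^\leftarrow$ contain $\bullet$ and $y$ is low, raise $y$ and move it to $\mathsf b^\leftarrow$; or if $\mathsf b^{\uparrow\leftarrow}$ contains an entry, $\mathsf b^\uparrow,\mathsf b^\leftarrow$ contain $\bullet$ and $y$ is low, move $y$ to $\mathsf b^\leftarrow$; or in the same situation with $y$ high, move $y$ to $\mathsf b^\uparrow$. (R4) if $y=\underline k$, $\mathsf b^\leftarrow$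 is diagonal and contains $\bullet$, and the diagonal cell $\mathsf b^\downarrow$ contains $\overline k$: put $\overline k$ in $\mathsf b^\leftarrow$ and in $\mathsf b$, and $\bullet$ in $\mathsf b^\downarrow$. (R5) if $\mathsf b^\leftarrow$ is diagonal and contains $\bullet$ and $\mathsf b^\downarrow$ is a cell, raise $y$ and move it to $\mathsf b^\leftarrow$; or if $\mathsf b$ is diagonal, $y$ is high, $\mathsf b^\uparrow$ contains $\bullet$ and $\mathsf b^{\uparrow\leftarrow}$ contains an entry, lower $y$ and move it to $\mathsf b^\uparrow$. (R6) if $\mathsf b^\leftarrow$ contains $\bullet$, move $y$ to $\mathsf b^\leftarrow$; if $\mathsf b^\uparrow$ contains $\bullet$, move $y$ to $\mathsf b^\uparrow$. Repeat with the new least available entry until no entry is available; the result has some shape $\nu'/\mu'$. Then place bullets in the bottom row of $\mu'$ and repeat, until a tableau of straight shape is obtained. *)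

theory Defs
  imports Main
begin

text \<open>Low letter i and high letter i (i a positive integer), ordered
  Low 1 < High 1 < Low 2 < High 2 < ...\<close>

datatype letter = Low nat | High nat

fun letter_rank :: "letter \<Rightarrow> nat" where
  "letter_rank (Low i) = 2 * i"
| "letter_rank (High i) = 2 * i + 1"

fun letter_index :: "letter \<Rightarrow> nat" where
  "letter_index (Low i) = i"
| "letter_index (High i) = i"

fun is_low :: "letter \<Rightarrow> bool" where
  "is_low (Low _) = True"
| "is_low (High _) = False"

abbreviation is_high :: "letter \<Rightarrow> bool" where
  "is_high x \<equiv> \<not> is_low x"

fun raise_letter :: "letter \<Rightarrow> letter" where
  "raise_letter (Low i) = High i"
| "raise_letter (High i) = High i"

fun lower_letter :: "letter \<Rightarrow> letter" where
  "lower_letter (Low i) = Low i"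
| "lower_letter (High i) = Low i"

lemma letter_rank_inj: "letter_rank x = letter_rank y \<Longrightarrow> x = y"
  by (cases x; cases y; simp; presburger)

instantiation letter :: linorder
begin
definition less_eq_letter :: "letter \<Rightarrow> letter \<Rightarrow> bool" where
  "less_eq_letter x y \<longleftrightarrow> letter_rank x \<le> letter_rank y"
definition less_letter :: "letter \<Rightarrow> letter \<Rightarrow> bool" where
  "less_letter x y \<longleftrightarrow> letter_rank x < letter_rank y"
instance
  by standard (auto simp: less_eq_letter_def less_letter_def intro: letter_rank_inj)
end

type_synonym cell = "nat \<times> nat"  \<comment> \<open>(row, column), rows and columns start at 1\<close>

definition strict_partition :: "nat list \<Rightarrow> bool" where
  "strict_partition lam \<longleftrightarrow> sorted_wrt (>) lam \<and> (\<forall>x\<in>set lam. 0 < x)"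

definition shifted_diagram :: "nat list \<Rightarrow> cell set" where
  "shifted_diagram lam =
     {(i, j). 1 \<le> i \<and> i \<le> length lam \<and> i \<le> j \<and> j < i + lam ! (i - 1)}"

definition skew_shape :: "nat list \<Rightarrow> nat list \<Rightarrow> cell set" where
  "skew_shape nu mu = shifted_diagram nu - shifted_diagram mu"

definition diagonal :: "cell \<Rightarrow> bool" where
  "diagonal c \<longleftrightarrow> fst c = snd c"

definition up :: "cell \<Rightarrow> cell" where "up c = (fst c - 1, snd c)"
definition left :: "cell \<Rightarrow> cell" where "left c = (fst c, snd c - 1)"
definition down :: "cell \<Rightarrow> cell" where "down c = (fst c + 1, snd c)"
definition upleft :: "cell \<Rightarrow> cell" where "upleft c = (fst c - 1, snd c - 1)"

definition weakly_se :: "cell \<Rightarrow> cell \<Rightarrow> bool" where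
  "weakly_se c d \<longleftrightarrow> fst c \<le> fst d \<and> snd c \<le> snd d"

definition southeast_of :: "cell \<Rightarrow> cell \<Rightarrow> bool" where
  "southeast_of c d \<longleftrightarrow> weakly_se c d \<and> d \<noteq> c"

definition semistandard :: "nat list \<Rightarrow> nat list \<Rightarrow> (cell \<Rightarrow> letter) \<Rightarrow> bool" where
  "semistandard nu mu T \<longleftrightarrow>
     (\<forall>c\<in>skew_shape nu mu. 1 \<le> letter_index (T c)) \<and>
     (\<forall>c\<in>skew_shape nu mu. \<forall>d\<in>skew_shape nu mu.
        fst c = fst d \<and> snd c < snd d \<longrightarrow> T c \<le> T d) \<and>
     (\<forall>c\<in>skew_shape nu mu. \<forall>d\<in>skew_shape nu mu.
        snd c = snd d \<and> fst c < fst d \<longrightarrow> T c \<le> T d) \<and>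
     (\<forall>c\<in>skew_shape nu mu. diagonal c \<longrightarrow> \<not> is_low (T c)) \<and>
     (\<forall>c\<in>skew_shape nu mu. \<forall>d\<in>skew_shape nu mu.
        snd c = snd d \<and> c \<noteq> d \<and> T c = T d \<longrightarrow> \<not> is_high (T c)) \<and>
     (\<forall>c\<in>skew_shape nu mu. \<forall>d\<in>skew_shape nu mu.
        fst c = fst d \<and> c \<noteq> d \<and> T c = T d \<longrightarrow> \<not> is_low (T c))"

text \<open>Each cell of the plane holds: nothing (Emp), a cell of the current inner
  shape mu' not carrying a bullet (Inner), a bullet (Bul), or an entry of the
  tableau together with a flag recording whether that entry has already moved.\<close>

datatype content = Emp | Inner | Bul | Ent bool letter

type_synonym state = "cell \<Rightarrow> content"

definition is_ent :: "state \<Rightarrow> cell \<Rightarrow> bool" where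
  "is_ent S c \<longleftrightarrow> (\<exists>m l. S c = Ent m l)"

definition is_bul :: "state \<Rightarrow> cell \<Rightarrow> bool" where
  "is_bul S c \<longleftrightarrow> S c = Bul"

fun letter_of :: "content \<Rightarrow> letter" where
  "letter_of (Ent _ l) = l"
| "letter_of _ = Low 0"

definition available :: "state \<Rightarrow> cell \<Rightarrow> bool" where
  "available S b \<longleftrightarrow> is_ent S b \<and> (is_bul S (up b) \<or> is_bul S (left b))"

definition avail_le :: "state \<Rightarrow> cell \<Rightarrow> cell \<Rightarrow> bool" where
  "avail_le S c d \<longleftrightarrow>
     (let x = letter_of (S c); y = letter_of (S d) in
       x < y \<or> (x = y \<and> (is_low x \<longrightarrow> fst c \<le> fst d) \<and> (is_high x \<longrightarrow> snd c \<le> snd d)))"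

definition least_available :: "state \<Rightarrow> cell \<Rightarrow> bool" where
  "least_available S b \<longleftrightarrow> available S b \<and> (\<forall>d. available S d \<longrightarrow> avail_le S b d)"

definition move :: "state \<Rightarrow> cell \<Rightarrow> cell \<Rightarrow> letter \<Rightarrow> state" where
  "move S b c l = S(b := Bul, c := Ent True l)"

definition slide :: "state \<Rightarrow> cell \<Rightarrow> state" where
  "slide S b =
    (let y = letter_of (S b);
         bU = is_bul S (up b); bL = is_bul S (left b); bUL = is_bul S (upleft b);
         eUL = is_ent S (upleft b); x = letter_of (S (upleft b)) in
     if bU \<and> bL \<and> bUL then move S b (upleft b) y                          \<comment> \<open>R1\<close>
     else if diagonal b \<and> bU \<and> bUL then move S b (upleft b) y           \<comment> \<open>R1\<close>
     else if eUL \<and> bU \<and> bL \<and> is_low y \<and> x \<noteq> y then move S b (up b) y    \<comment> \<open>R2\<close>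
     else if eUL \<and> bU \<and> bL \<and> is_high y \<and> x \<noteq> y then move S b (left b) y \<comment> \<open>R2\<close>
     else if diagonal (left b) \<and> eUL \<and> is_ent S (left (upleft b)) \<and> bU \<and> bL \<and> is_low y
       then move S b (left b) (raise_letter y)                             \<comment> \<open>R3\<close>
     else if eUL \<and> bU \<and> bL \<and> is_low y then move S b (left b) y          \<comment> \<open>R3\<close>
     else if eUL \<and> bU \<and> bL \<and> is_high y then move S b (up b) y           \<comment> \<open>R3\<close>
     else if is_low y \<and> diagonal (left b) \<and> bL \<and> diagonal (down b) \<and>
             (\<exists>m. S (down b) = Ent m (High (letter_index y)))
       then S(left b := Ent True (High (letter_index y)),
              b := Ent True (High (letter_index y)),
              down b := Bul)                                               \<comment> \<open>R4\<close>
     else if diagonal (left b) \<and> bL \<and> (is_ent S (down b) \<or> is_bul S (down b))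
       then move S b (left b) (raise_letter y)                             \<comment> \<open>R5\<close>
     else if diagonal b \<and> is_high y \<and> bU \<and> eUL
       then move S b (up b) (lower_letter y)                               \<comment> \<open>R5\<close>
     else if bL then move S b (left b) y                                   \<comment> \<open>R6\<close>
     else if bU then move S b (up b) y                                     \<comment> \<open>R6\<close>
     else S)"

definition delete_bullets :: "state \<Rightarrow> state" where
  "delete_bullets S =
     (\<lambda>c. if S c = Bul \<and> \<not> (\<exists>d. weakly_se c d \<and> is_ent S d) then Emp else S c)"

definition slide_step :: "state \<Rightarrow> state \<Rightarrow> bool" where
  "slide_step S S' \<longleftrightarrow> (\<exists>b. least_available S b \<and> S' = delete_bullets (slide S b))"

text \<open>Start of a new round: no entry is available; the result has shape nu'/mu'
  (mu' = the Inner cells); bullets are placed in the bottom row of mu'.\<close>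
definition round_start :: "state \<Rightarrow> state \<Rightarrow> bool" where
  "round_start S S' \<longleftrightarrow>
     (\<forall>b. \<not> available S b) \<and>
     (\<exists>r. (\<exists>c. S c = Inner \<and> fst c = r) \<and> (\<forall>c. S c = Inner \<longrightarrow> fst c \<le> r) \<and>
          S' = delete_bullets
                 (\<lambda>c. if S c = Inner \<and> fst c = r then Bul
                      else if S c = Bul then Emp else S c))"

definition mr_step :: "state \<Rightarrow> state \<Rightarrow> bool" where
  "mr_step S S' \<longleftrightarrow> slide_step S S' \<or> round_start S S'"

definition mr_init :: "nat list \<Rightarrow> nat list \<Rightarrow> (cell \<Rightarrow> letter) \<Rightarrow> state" where
  "mr_init nu mu T =
     (\<lambda>c. if c \<in> skew_shape nu mu then Ent False (T c)
          else if c \<in> shifted_diagram mu then Inner else Emp)"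

definition mr_stage :: "nat list \<Rightarrow> nat list \<Rightarrow> (cell \<Rightarrow> letter) \<Rightarrow> state \<Rightarrow> bool" where
  "mr_stage nu mu T S \<longleftrightarrow> mr_step\<^sup>*\<^sup>* (mr_init nu mu T) S"

end

theory Submission
  imports Defs
begin

lemma sp_decr:
  assumes "strict_partition lam" "i \<le> j" "j < length lam"
  shows "lam ! j + (j - i) \<le> lam ! i"
  using assms(2,3)
proof (induction j rule: dec_induct)
  case base
  then show ?case by simp
next
  case (step n)
  have "lam ! Suc n < lam ! n"
    using assms(1) step unfolding strict_partition_def
    by (metis Suc_lessD lessI sorted_wrt_nth_less)
  with step show ?case by simp
qed

lemma sd_ideal:
  assumes "strict_partition lam" "(a, b) \<in> shifted_diagram lam"
    "1 \<le> a'" "a' \<le> a" "a' \<le> b'" "b' \<le> b"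
  shows "(a', b') \<in> shifted_diagram lam"
proof -
  have a: "1 \<le> a" "a \<le> length lam" "b < a + lam ! (a - 1)"
    using assms(2) unfolding shifted_diagram_def by auto
  have "lam ! (a - 1) + ((a - 1) - (a' - 1)) \<le> lam ! (a' - 1)"
    using sp_decr[OF assms(1), of "a' - 1" "a - 1"] assms a by auto
  then have "b' < a' + lam ! (a' - 1)" using a assms by linarith
  then show ?thesis using a assms unfolding shifted_diagram_def by auto
qed

lemma mid_cell:
  assumes "strict_partition nu" "strict_partition mu"
    "c \<in> skew_shape nu mu" "e \<in> skew_shape nu mu" "weakly_se c e"
  shows "(fst c, snd e) \<in> skew_shape nu mu"
proof -
  obtain r s p q where c: "c = (r, s)" and e: "e = (p, q)" by (cases c, cases e)
  have cn: "1 \<le> r" "r \<le> s" "(r, s) \<notin> shifted_diagram mu"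
    using assms(3) c unfolding skew_shape_def shifted_diagram_def by auto
  have on: "(p, q) \<in> shifted_diagram nu" using assms(4) e unfolding skew_shape_def by auto
  have w: "r \<le> p" "s \<le> q" using assms(5) c e unfolding weakly_se_def by auto
  have "(r, q) \<in> shifted_diagram nu"
    using sd_ideal[OF assms(1) on, of r q] cn w by auto
  moreover have "(r, q) \<notin> shifted_diagram mu"
    using sd_ideal[OF assms(2), of r q r s] cn w by auto
  ultimately show ?thesis using c e unfolding skew_shape_def by auto
qed

lemma rank_le: "(x::letter) \<le> y \<longleftrightarrow> letter_rank x \<le> letter_rank y"
  by (simp add: less_eq_letter_def)

lemma ss_le:
  assumes "strict_partition nu" "strict_partition mu" "semistandard nu mu T"
    "c \<in> skew_shape nu mu" "e \<in> skew_shape nu mu" "weakly_se c e"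
  shows "T c \<le> T e"
proof -
  have m: "(fst c, snd e) \<in> skew_shape nu mu" using mid_cell assms by blast
  have w: "fst c \<le> fst e" "snd c \<le> snd e" using assms(6) unfolding weakly_se_def by auto
  have "T c \<le> T (fst c, snd e)"
  proof (cases "snd c = snd e")
    case True then show ?thesis by (metis order_refl prod.collapse)
  next
    case False then show ?thesis using assms(3,4) m w unfolding semistandard_def by force
  qed
  also have "T (fst c, snd e) \<le> T e"
  proof (cases "fst c = fst e")
    case True then show ?thesis by (metis order_refl prod.collapse)
  next
    case False then show ?thesis using assms(3,5) m w unfolding semistandard_def by force
  qed
  finally show ?thesis .
qed

lemma ss_strict:
  assumes "strict_partition nu" "strict_partition mu" "semistandard nu mu T"
    "c \<in> skew_shape nu mu" "e \<in> skew_shape nu mu" "fst c < fst e" "snd c \<le> snd e"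
    "T c = High k"
  shows "k < letter_index (T e)"
proof -
  let ?m = "(fst c, snd e)"
  have ws: "weakly_se c e" using assms(6,7) unfolding weakly_se_def by simp
  have m: "?m \<in> skew_shape nu mu" by (rule mid_cell[OF assms(1,2,4,5) ws])
  have "T c \<le> T ?m"
    by (rule ss_le[OF assms(1-3,4) m]) (simp add: weakly_se_def assms(7))
  moreover have "T ?m \<le> T e"
    by (rule ss_le[OF assms(1-3) m assms(5)]) (simp add: weakly_se_def less_imp_le assms(6))
  moreover have "T ?m = T e \<longrightarrow> \<not> is_high (T ?m)"
  proof -
    have col: "\<forall>c\<in>skew_shape nu mu. \<forall>d\<in>skew_shape nu mu.
        snd c = snd d \<and> c \<noteq> d \<and> T c = T d \<longrightarrow> \<not> is_high (T c)"
      using assms(3) unfolding semistandard_def by blast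
    have "?m \<noteq> e" using assms(6) by (metis fst_conv less_irrefl)
    then show ?thesis using col m assms(5) by simp
  qed
  ultimately have "2 * k + 1 < letter_rank (T e)"
    using assms(8) unfolding rank_le
    by (cases "T ?m"; cases "T e"; simp; presburger)
  then show ?thesis by (cases "T e") auto
qed

definition inv :: "nat list \<Rightarrow> nat list \<Rightarrow> (cell \<Rightarrow> letter) \<Rightarrow> state \<Rightarrow> bool" where
  "inv nu mu T S \<longleftrightarrow>
    (\<forall>c x. S c = Ent False x \<longrightarrow> c \<in> skew_shape nu mu \<and> x = T c) \<and>
    (\<forall>d m y. S d = Ent m y \<longrightarrow> (\<exists>e\<in>skew_shape nu mu. weakly_se d e \<and> letter_index (T e) = letter_index y)) \<and>
    (\<forall>c d x m y. S c = Ent False x \<longrightarrow> southeast_of c d \<longrightarrow> S d = Ent m y \<longrightarrow> x \<le> y)"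

lemma inv_cong:
  assumes "\<And>c m y. S' c = Ent m y \<longleftrightarrow> S c = Ent m y"
  shows "inv nu mu T S' = inv nu mu T S"
  unfolding inv_def using assms by simp

lemma del_ent: "delete_bullets S c = Ent m y \<longleftrightarrow> S c = Ent m y"
  unfolding delete_bullets_def by auto

lemma ws_trans: "weakly_se a b \<Longrightarrow> weakly_se b c \<Longrightarrow> weakly_se a c"
  unfolding weakly_se_def by auto

lemma inv_move:
  assumes "inv nu mu T S" "S b = Ent m0 y" "weakly_se t b" "letter_index l = letter_index y"
    "\<And>c x. S c = Ent False x \<Longrightarrow> weakly_se c t \<Longrightarrow> c \<noteq> t \<Longrightarrow> c \<noteq> b \<Longrightarrow> x \<le> l"
  shows "inv nu mu T (move S b t l)"
proof -
  have I1: "\<And>c x. S c = Ent False x \<Longrightarrow> c \<in> skew_shape nu mu \<and> x = T c"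
    and I2: "\<And>d m y. S d = Ent m y \<Longrightarrow> (\<exists>e\<in>skew_shape nu mu. weakly_se d e \<and> letter_index (T e) = letter_index y)"
    and I3: "\<And>c d x m y. S c = Ent False x \<Longrightarrow> southeast_of c d \<Longrightarrow> S d = Ent m y \<Longrightarrow> x \<le> y"
    using assms(1) unfolding inv_def by blast+
  let ?S = "move S b t l"
  have P1: "c \<noteq> t \<and> c \<noteq> b \<and> S c = Ent False x" if "?S c = Ent False x" for c x
    using that unfolding move_def by (auto split: if_splits)
  have A: "\<forall>c x. ?S c = Ent False x \<longrightarrow> c \<in> skew_shape nu mu \<and> x = T c"
    using P1 I1 by blast
  have B: "\<forall>d m y'. ?S d = Ent m y' \<longrightarrow> (\<exists>e\<in>skew_shape nu mu. weakly_se d e \<and> letter_index (T e) = letter_index y')"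
  proof (intro allI impI)
    fix d m y' assume h: "?S d = Ent m y'"
    show "\<exists>e\<in>skew_shape nu mu. weakly_se d e \<and> letter_index (T e) = letter_index y'"
    proof (cases "d = t")
      case True
      then have "y' = l" using h unfolding move_def by auto
      then show ?thesis using I2[OF assms(2)] assms(3,4) True ws_trans by metis
    next
      case False
      then have "d \<noteq> b" "S d = Ent m y'" using h unfolding move_def by (auto split: if_splits)
      then show ?thesis using I2 by blast
    qed
  qed
  have C: "\<forall>c d x m y'. ?S c = Ent False x \<longrightarrow> southeast_of c d \<longrightarrow> ?S d = Ent m y' \<longrightarrow> x \<le> y'"
  proof (intro allI impI)
    fix c d x m y' assume h1: "?S c = Ent False x" and se: "southeast_of c d" and h2: "?S d = Ent m y'"
    from P1[OF h1] have c: "c \<noteq> t" "c \<noteq> b" "S c = Ent False x" by auto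
    show "x \<le> y'"
    proof (cases "d = t")
      case True
      then have "y' = l" using h2 unfolding move_def by auto
      then show ?thesis using assms(5)[OF c(3)] c se True unfolding southeast_of_def by auto
    next
      case False
      then have "S d = Ent m y'" using h2 unfolding move_def by (auto split: if_splits)
      then show ?thesis using I3 c se by blast
    qed
  qed
  show ?thesis unfolding inv_def using A B C by blast
qed

lemma raise_ge: "y \<le> raise_letter y" "letter_index (raise_letter y) = letter_index y"
  by (cases y; simp add: less_eq_letter_def)+

lemma lower_idx: "letter_index (lower_letter y) = letter_index y"
  by (cases y) auto

lemma ws_up: "weakly_se (up b) b" "weakly_se (left b) b" "weakly_se (upleft b) b"
  "weakly_se (left b) (down b)"
  unfolding weakly_se_def up_def left_def upleft_def down_def by auto

lemma inv_R4:
  assumes "inv nu mu T S" "S b = Ent m0 (Low k)" "S (down b) = Ent m1 (High k)"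
  shows "inv nu mu T (S(left b := Ent True (High k), b := Ent True (High k), down b := Bul))"
proof -
  have I1: "\<And>c x. S c = Ent False x \<Longrightarrow> c \<in> skew_shape nu mu \<and> x = T c"
    and I2: "\<And>d m y. S d = Ent m y \<Longrightarrow> (\<exists>e\<in>skew_shape nu mu. weakly_se d e \<and> letter_index (T e) = letter_index y)"
    and I3: "\<And>c d x m y. S c = Ent False x \<Longrightarrow> southeast_of c d \<Longrightarrow> S d = Ent m y \<Longrightarrow> x \<le> y"
    using assms(1) unfolding inv_def by blast+
  let ?S = "S(left b := Ent True (High k), b := Ent True (High k), down b := Bul)"
  have P1: "c \<noteq> left b \<and> c \<noteq> b \<and> c \<noteq> down b \<and> S c = Ent False x" if "?S c = Ent False x" for c x
    using that by (auto split: if_splits)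
  have A: "\<forall>c x. ?S c = Ent False x \<longrightarrow> c \<in> skew_shape nu mu \<and> x = T c"
    using P1 I1 by blast
  have B: "\<forall>d m y'. ?S d = Ent m y' \<longrightarrow> (\<exists>e\<in>skew_shape nu mu. weakly_se d e \<and> letter_index (T e) = letter_index y')"
  proof (intro allI impI)
    fix d m y' assume h: "?S d = Ent m y'"
    show "\<exists>e\<in>skew_shape nu mu. weakly_se d e \<and> letter_index (T e) = letter_index y'"
    proof (cases "d = b")
      case True
      then have "y' = High k" using h by (auto split: if_splits)
      then show ?thesis using I2[OF assms(2)] True by auto
    next
      case F1: False
      show ?thesis
      proof (cases "d = left b")
        case True
        then have "y' = High k" using h F1 by (auto split: if_splits)
        then show ?thesis using I2[OF assms(3)] True ws_trans ws_up(4) by metis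
      next
        case False
        then have "S d = Ent m y'" using h F1 by (auto split: if_splits)
        then show ?thesis using I2 by blast
      qed
    qed
  qed
  have C: "\<forall>c d x m y'. ?S c = Ent False x \<longrightarrow> southeast_of c d \<longrightarrow> ?S d = Ent m y' \<longrightarrow> x \<le> y'"
  proof (intro allI impI)
    fix c d x m y' assume h1: "?S c = Ent False x" and se: "southeast_of c d" and h2: "?S d = Ent m y'"
    from P1[OF h1] have c: "c \<noteq> left b" "c \<noteq> b" "c \<noteq> down b" "S c = Ent False x" by auto
    show "x \<le> y'"
    proof (cases "d = b \<or> d = left b")
      case True
      then have y': "y' = High k" using h2 by (auto split: if_splits)
      have "weakly_se c b" using True se ws_trans ws_up(2) unfolding southeast_of_def by metis
      then have "southeast_of c b" using c unfolding southeast_of_def by auto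
      then have "x \<le> Low k" using I3 c(4) assms(2) by blast
      then show ?thesis using y' by (simp add: less_eq_letter_def)
    next
      case False
      then have "S d = Ent m y'" using h2 by (auto split: if_splits)
      then show ?thesis using I3 c se by blast
    qed
  qed
  show ?thesis unfolding inv_def using A B C by blast
qed

lemma ifI: "(c \<Longrightarrow> P a) \<Longrightarrow> (\<not> c \<Longrightarrow> P b) \<Longrightarrow> P (if c then a else b)"
  by auto

lemma inv_slide:
  assumes sp: "strict_partition nu" "strict_partition mu" and ss: "semistandard nu mu T"
    and iv: "inv nu mu T S" and sb: "S b = Ent m0 y"
  shows "inv nu mu T (slide S b)"
proof -
  have I1: "\<And>c x. S c = Ent False x \<Longrightarrow> c \<in> skew_shape nu mu \<and> x = T c"
    and I2: "\<And>d m y. S d = Ent m y \<Longrightarrow> (\<exists>e\<in>skew_shape nu mu. weakly_se d e \<and> letter_index (T e) = letter_index y)"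
    and I3: "\<And>c d x m y. S c = Ent False x \<Longrightarrow> southeast_of c d \<Longrightarrow> S d = Ent m y \<Longrightarrow> x \<le> y"
    using iv unfolding inv_def by blast+
  have yb: "letter_of (S b) = y" using sb by simp
  have M: "inv nu mu T (move S b t y) \<and> inv nu mu T (move S b t (raise_letter y))"
    if t: "t = up b \<or> t = left b \<or> t = upleft b" for t
  proof -
    have wt: "weakly_se t b" using t ws_up(1,2,3) by metis
    have le: "x \<le> y" if "S c = Ent False x" "weakly_se c t" "c \<noteq> t" "c \<noteq> b" for c x
    proof -
      have "southeast_of c b" using that wt ws_trans unfolding southeast_of_def by metis
      then show ?thesis using I3 that(1) sb by blast
    qed
    show ?thesis
    proof
      show "inv nu mu T (move S b t y)"
        by (rule inv_move[OF iv sb wt refl]) (rule le)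
      show "inv nu mu T (move S b t (raise_letter y))"
        by (rule inv_move[OF iv sb wt raise_ge(2)]) (metis le raise_ge(1) order_trans)
    qed
  qed
  have L: "inv nu mu T (move S b (up b) (lower_letter y))"
  proof (rule inv_move[OF iv sb ws_up(1) lower_idx])
    fix c x assume h: "S c = Ent False x" "weakly_se c (up b)" "c \<noteq> up b" "c \<noteq> b"
    have "southeast_of c b" using h ws_up(1) ws_trans unfolding southeast_of_def by metis
    then have xy: "x \<le> y" using I3 h(1) sb by blast
    show "x \<le> lower_letter y"
    proof (cases y)
      case (Low k)
      then show ?thesis using xy by simp
    next
      case (High k)
      have cs: "c \<in> skew_shape nu mu" "x = T c" using I1 h(1) by auto
      obtain e where e: "e \<in> skew_shape nu mu" "weakly_se b e" "letter_index (T e) = k"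
        using I2[OF sb] High by auto
      have "x \<noteq> High k"
      proof
        assume xh: "x = High k"
        have "1 \<le> fst c" using cs(1) unfolding skew_shape_def shifted_diagram_def by auto
        moreover have "fst c \<le> fst b - 1" "snd c \<le> snd b"
          using h(2) unfolding weakly_se_def up_def by auto
        ultimately have "fst c < fst e" "snd c \<le> snd e" using e(2) unfolding weakly_se_def by auto
        then have "k < letter_index (T e)"
          using ss_strict[OF sp ss cs(1) e(1)] xh cs(2) by auto
        then show False using e(3) by simp
      qed
      then show ?thesis using xy High letter_rank_inj unfolding rank_le
        by (cases x; simp; presburger)
    qed
  qed
  have R: "inv nu mu T (S(left b := Ent True (High (letter_index y)), b := Ent True (High (letter_index y)), down b := Bul))"
    if r4: "is_low y" "\<exists>m. S (down b) = Ent m (High (letter_index y))"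
  proof -
    obtain k where k: "y = Low k" using r4(1) by (cases y) auto
    obtain m1 where "S (down b) = Ent m1 (High k)" using r4(2) k by auto
    then show ?thesis using inv_R4[OF iv sb[unfolded k]] k by simp
  qed
  have Mu: "inv nu mu T (move S b (up b) y)" "inv nu mu T (move S b (left b) y)"
    "inv nu mu T (move S b (upleft b) y)" "inv nu mu T (move S b (left b) (raise_letter y))"
    using M by auto
  show ?thesis
    unfolding slide_def Let_def yb
    by (intro ifI[where P = "inv nu mu T"]; use Mu L R iv in auto)
qed

lemma inv_init:
  assumes sp: "strict_partition nu" "strict_partition mu" and ss: "semistandard nu mu T"
  shows "inv nu mu T (mr_init nu mu T)"
proof -
  have E: "mr_init nu mu T c = Ent m y \<longleftrightarrow> c \<in> skew_shape nu mu \<and> m = False \<and> y = T c" for c m y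
    unfolding mr_init_def by auto
  have B: "\<exists>e\<in>skew_shape nu mu. weakly_se d e \<and> letter_index (T e) = letter_index (T d)"
    if "d \<in> skew_shape nu mu" for d
    using that unfolding weakly_se_def by blast
  have C: "T c \<le> T d" if "c \<in> skew_shape nu mu" "d \<in> skew_shape nu mu" "southeast_of c d" for c d
    using ss_le[OF sp ss that(1,2)] that(3) unfolding southeast_of_def by blast
  show ?thesis unfolding inv_def E using B C by blast
qed

lemma inv_step:
  assumes sp: "strict_partition nu" "strict_partition mu" and ss: "semistandard nu mu T"
    and st: "mr_step S S'" and iv: "inv nu mu T S"
  shows "inv nu mu T S'"
  using st unfolding mr_step_def
proof
  assume "slide_step S S'"
  then obtain b where b: "least_available S b" "S' = delete_bullets (slide S b)"
    unfolding slide_step_def by blast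
  then obtain m0 y where sb: "S b = Ent m0 y"
    unfolding least_available_def available_def is_ent_def by blast
  have "inv nu mu T (slide S b)" by (rule inv_slide[OF sp ss iv sb])
  then show ?thesis using b(2) inv_cong[of "delete_bullets (slide S b)" "slide S b"] del_ent by metis
next
  assume "round_start S S'"
  then obtain r where r: "S' = delete_bullets
                 (\<lambda>c. if S c = Inner \<and> fst c = r then Bul
                      else if S c = Bul then Emp else S c)"
    unfolding round_start_def by blast
  have "S' c = Ent m y \<longleftrightarrow> S c = Ent m y" for c m y
    unfolding r del_ent by auto
  then show ?thesis using inv_cong iv by metis
qed

theorem lemma3p5:
  fixes nu mu :: "nat list" and T :: "cell \<Rightarrow> letter" and S :: state
    and c d :: cell and x y :: letter and m :: bool
  assumes "strict_partition nu" and "strict_partition mu"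
    and "shifted_diagram mu \<subseteq> shifted_diagram nu"
    and "semistandard nu mu T"
    and "mr_stage nu mu T S"
    and "S c = Ent False x"
    and "southeast_of c d"
    and "S d = Ent m y"
  shows "x \<le> y"
proof -
  have "mr_step\<^sup>*\<^sup>* (mr_init nu mu T) S" using assms(5) unfolding mr_stage_def .
  then have "inv nu mu T S"
  proof (induction rule: rtranclp_induct)
    case base
    then show ?case using inv_init assms(1,2,4) by blast
  next
    case (step S1 S2)
    then show ?case using inv_step assms(1,2,4) by blast
  qed
  then show ?thesis using assms(6-8) unfolding inv_def by blast
qed

end
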